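(* Let $\tau_n\in\Gamma_n$ be a fixed rooted planar tree, let $\ell_n$ be a uniformly random admissible labeling of $\tau_n$, and let $(S^{\tau_n}_m)_{m=0}^n$ be the conditioned walk defined below. Then $$\big(S^{\tau_n}_m\big)_{m=0}^n\overset{d}{=}\big(\ell_n(c_m)\big)_{m=0}^n .$$
   Context: A rooted planar tree is a finite rooted plane (ordered) tree; $\Gamma_n$ is the set of rooted planar trees with $n$ edges. Vertices at even distance from the root (including the root) are white, those at odd distance are black; $V^\bullet(\tau)$ denotes the black vertices. For a black vertex $u$ of degree $k$ (number of neighbours), let $u_0$ be its parent and $u_1,\dots,u_{k-1}$ its children in clockwise order, $u_k=u_0$. An admissible labeling is a map $\ell$ from the white vertices to $\mathbb Z$ with $\ell(\text{root})=0$ and $\ell(u_{j+1})\ge \ell(u_j)-1$ for every black $u$ and $0\le j\le k-1$. White contour sequence: the clockwise contour walk around $\tau_n$ from the root has $2n$ steps alternately visiting white and black vertices; $c_m$ is the white vertex visited at step $2m$, $m=0,\dots,n$. For black $v$, $B_v\subseteq\{1,\dots,n\}$ is the set of $i$ such that the contour walk passes through $v$ between its visits to $c_{i-1}$ and $c_i$. Let $\xi_i$ be i.i.d. with $\mathbb P(\xi_1=i)=2^{-i-2}$, $i\ge-1$; $S_m=\sum_{i\le m}\xi_i$, $S_B=\sum_{i\in B}\xi_i$; $(S^{\tau_n}_m)_{m=0}^n$ has the law of $(S_m)_{m=0}^n$ conditioned on $\{S_{B_v}=0\ \forall v\in V^\bullet(\tau_n)\}$. *)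

theory Defs
  imports "HOL-Probability.Probability"
begin

text \<open>A rooted plane tree: a node with an ordered list of subtrees (in clockwise order).
  Vertices are addressed by positions (Ulam-Harris words): the root is the empty list,
  and the i-th child (0-based, clockwise order) of the vertex p is p @ [i].\<close>

datatype ptree = Node "ptree list"

fun subtree :: "ptree \<Rightarrow> nat list \<Rightarrow> ptree option" where
  "subtree t [] = Some t"
| "subtree (Node ts) (i # p) = (if i < length ts then subtree (ts ! i) p else None)"

definition vertices :: "ptree \<Rightarrow> nat list set" where
  "vertices t = {p. subtree t p \<noteq> None}"

fun kids :: "ptree \<Rightarrow> ptree list" where
  "kids (Node ts) = ts"

definition nchildren :: "ptree \<Rightarrow> nat list \<Rightarrow> nat" where
  "nchildren t p = (case subtree t p of Some s \<Rightarrow> length (kids s) | None \<Rightarrow> 0)"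

text \<open>number of edges = number of vertices - 1;  \<Gamma>_n = {t. edges t = n}\<close>
definition edges :: "ptree \<Rightarrow> nat" where
  "edges t = card (vertices t) - 1"

definition white :: "ptree \<Rightarrow> nat list set" where
  "white t = {p \<in> vertices t. even (length p)}"

definition black :: "ptree \<Rightarrow> nat list set" where
  "black t = {p \<in> vertices t. odd (length p)}"

text \<open>For a black vertex u of degree k = nchildren + 1:  u_0 = parent,
  u_j = j-th child (j = 1..k-1, clockwise order), u_k = u_0.\<close>
definition bdeg :: "ptree \<Rightarrow> nat list \<Rightarrow> nat" where
  "bdeg t u = nchildren t u + 1"

definition nbr :: "ptree \<Rightarrow> nat list \<Rightarrow> nat \<Rightarrow> nat list" where
  "nbr t u j = (if j = 0 \<or> j = bdeg t u then butlast u else u @ [j - 1])"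

text \<open>A labeling is a map from the white vertices to the integers;
  it is represented extensionally as a function on all positions which is 0 off the white
  vertices (so that the set of admissible labelings is a set of distinct objects in
  bijection with the labelings on white vertices).\<close>
definition admissible :: "ptree \<Rightarrow> (nat list \<Rightarrow> int) set" where
  "admissible t = {l. l [] = 0 \<and> (\<forall>p. p \<notin> white t \<longrightarrow> l p = 0) \<and>
      (\<forall>u \<in> black t. \<forall>j < bdeg t u. l (nbr t u (Suc j)) \<ge> l (nbr t u j) - 1)}"

text \<open>Clockwise contour walk from the root: the list of the 2n+1 vertices visited at
  steps 0, 1, ..., 2n.\<close>
fun contour :: "ptree \<Rightarrow> nat list list"
and contour_list :: "nat \<Rightarrow> ptree list \<Rightarrow> nat list list" where
  "contour (Node ts) = [] # contour_list 0 ts"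
| "contour_list i [] = []"
| "contour_list i (s # ss) = map (Cons i) (contour s) @ [[]] @ contour_list (Suc i) ss"

definition wc :: "ptree \<Rightarrow> nat \<Rightarrow> nat list" where
  "wc t m = contour t ! (2 * m)"

definition Bset :: "ptree \<Rightarrow> nat list \<Rightarrow> nat set" where
  "Bset t v = {i \<in> {1..edges t}. contour t ! (2 * i - 1) = v}"

definition xi_pmf :: "int pmf" where
  "xi_pmf = embed_pmf (\<lambda>i. if i \<ge> -1 then (1/2) powr (real_of_int (i + 2)) else 0)"

definition increments :: "nat \<Rightarrow> (nat \<Rightarrow> int) pmf" where
  "increments n = Pi_pmf {1..n} 0 (\<lambda>_. xi_pmf)"

definition walk_path :: "nat \<Rightarrow> (nat \<Rightarrow> int) \<Rightarrow> int list" where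
  "walk_path n x = map (\<lambda>m. \<Sum>i\<in>{1..m}. x i) [0..<n+1]"

definition cond_event :: "ptree \<Rightarrow> (nat \<Rightarrow> int) set" where
  "cond_event t = {x. \<forall>v \<in> black t. (\<Sum>i\<in>Bset t v. x i) = 0}"

definition cond_walk :: "ptree \<Rightarrow> int list pmf" where
  "cond_walk t = map_pmf (walk_path (edges t)) (cond_pmf (increments (edges t)) (cond_event t))"

definition label_seq :: "ptree \<Rightarrow> int list pmf" where
  "label_seq t = map_pmf (\<lambda>l. map (\<lambda>m. l (wc t m)) [0..<edges t + 1]) (pmf_of_set (admissible t))"

end

theory Submission
  imports Defs
begin


lemma contour_ne: "contour t \<noteq> []" by (cases t) simp
lemma contour_0[simp]: "contour t ! 0 = []" by (cases t) simp
lemma len_contour_pos: "0 < length (contour t)" using contour_ne by auto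

definition off :: "ptree list \<Rightarrow> nat \<Rightarrow> nat" where
  "off ts k = (\<Sum>j<k. Suc (length (contour (ts!j))))"

lemma off_0[simp]: "off ts 0 = 0" by (simp add: off_def)
lemma off_Suc: "off ts (Suc k) = off ts k + Suc (length (contour (ts!k)))"
  by (simp add: off_def)
lemma off_Cons_Suc: "off (s#ss) (Suc k) = Suc (length (contour s)) + off ss k"
  unfolding off_def by (subst sum.lessThan_Suc_shift) simp

lemma off_mono: "j \<le> j' \<Longrightarrow> off ts j \<le> off ts j'"
  unfolding off_def by (rule sum_mono2) auto

lemma off_lt: "k < k' \<Longrightarrow> off ts k + Suc (length (contour (ts!k))) \<le> off ts k'"
  using off_mono[of "Suc k" k' ts] by (simp add: off_Suc)

lemma len_cl: "length (contour_list i ts) = off ts (length ts)"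
  by (induction ts arbitrary: i) (auto simp: off_Cons_Suc)

lemma cl_nth: "k < length ts \<Longrightarrow> q \<le> length (contour (ts!k)) \<Longrightarrow>
  contour_list i ts ! (off ts k + q) = (if q < length (contour (ts!k)) then (i+k) # contour (ts!k) ! q else [])"
proof (induction ts arbitrary: i k)
  case Nil thus ?case by simp
next
  case (Cons s ss)
  show ?case
  proof (cases k)
    case 0 thus ?thesis using Cons.prems by (auto simp: nth_append)
  next
    case (Suc k')
    hence "contour_list i (s#ss) ! (off (s#ss) k + q) = contour_list (Suc i) ss ! (off ss k' + q)"
      by (simp add: off_Cons_Suc nth_append)
    then show ?thesis using Cons.IH[of k' "Suc i"] Cons.prems Suc by simp
  qed
qed

lemma cl_loc: "r < length (contour_list i ts) \<Longrightarrow> \<exists>k<length ts. \<exists>q\<le>length (contour (ts!k)). r = off ts k + q"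
proof (induction ts arbitrary: i r)
  case Nil thus ?case by simp
next
  case (Cons s ss)
  show ?case
  proof (cases "r \<le> length (contour s)")
    case True then show ?thesis by (intro exI[of _ 0]) auto
  next
    case False
    define r' where "r' = r - Suc (length (contour s))"
    have r: "r = Suc (length (contour s)) + r'" using False r'_def by simp
    have "r' < length (contour_list (Suc i) ss)" using Cons.prems r by simp
    from Cons.IH[OF this] obtain k q where "k < length ss" "q \<le> length (contour (ss!k))" "r' = off ss k + q" by blast
    then show ?thesis using r by (intro exI[of _ "Suc k"]) (auto simp: off_Cons_Suc)
  qed
qed

lemma C_len: "length (contour (Node ts)) = Suc (off ts (length ts))"
  by (simp add: len_cl)

lemma C_nth: "k < length ts \<Longrightarrow> q \<le> length (contour (ts!k)) \<Longrightarrow>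
  contour (Node ts) ! Suc (off ts k + q) = (if q < length (contour (ts!k)) then k # contour (ts!k) ! q else [])"
  using cl_nth[of k ts q 0] by simp

lemma C_loc: "0 < s \<Longrightarrow> s < length (contour (Node ts)) \<Longrightarrow>
   \<exists>k<length ts. \<exists>q\<le>length (contour (ts!k)). s = Suc (off ts k + q)"
  using cl_loc[of "s - 1" 0 ts] by (cases s) auto

lemma R0: "j \<le> length ts \<Longrightarrow> contour (Node ts) ! off ts j = []"
proof (cases j)
  case 0 then show ?thesis by simp
next
  case (Suc j')
  assume "j \<le> length ts"
  then show ?thesis using C_nth[of j' ts "length (contour (ts!j'))"] Suc by (simp add: off_Suc)
qed

lemma C_last: "contour t ! (length (contour t) - 1) = []"
proof (cases t)
  case (Node ts)
  then show ?thesis using R0[of "length ts" ts] by (simp add: len_cl)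
qed

lemma R1: "j < length ts \<Longrightarrow> contour (Node ts) ! Suc (off ts j) = [j]"
  using C_nth[of j ts 0] len_contour_pos[of "ts!j"] by simp

lemma R2: "0 < j \<Longrightarrow> j \<le> length ts \<Longrightarrow> contour (Node ts) ! (off ts j - 1) = [j-1]"
proof -
  assume a: "0 < j" "j \<le> length ts"
  then obtain j' where j: "j = Suc j'" by (cases j) auto
  have "off ts j - 1 = Suc (off ts j' + (length (contour (ts!j')) - 1))"
    using j len_contour_pos[of "ts!j'"] by (simp add: off_Suc)
  then show ?thesis using C_nth[of j' ts "length (contour (ts!j')) - 1"] a j len_contour_pos[of "ts!j'"]
    C_last[of "ts!j'"] by simp
qed

lemma Rloc: "s < length (contour (Node ts)) \<Longrightarrow> contour (Node ts) ! s = [] \<Longrightarrow> \<exists>j\<le>length ts. s = off ts j"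
proof (cases "s = 0")
  case True then show ?thesis by (intro exI[of _ 0]) auto
next
  case False
  assume a: "s < length (contour (Node ts))" "contour (Node ts) ! s = []"
  from C_loc[of s ts] False a obtain k q where kq: "k < length ts" "q \<le> length (contour (ts!k))" "s = Suc (off ts k + q)" by auto
  have "q = length (contour (ts!k))" using C_nth[OF kq(1,2)] a kq by (auto split: if_splits)
  then show ?thesis using kq by (intro exI[of _ "Suc k"]) (auto simp: off_Suc)
qed



lemma vertices_Node: "v \<in> vertices (Node ts) \<longleftrightarrow> v = [] \<or> (\<exists>k w. v = k#w \<and> k < length ts \<and> w \<in> vertices (ts!k))"
  by (cases v) (auto simp: vertices_def)

lemma vertices_Node_eq: "vertices (Node ts) = insert [] (\<Union>k<length ts. Cons k ` vertices (ts!k))"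
proof (rule set_eqI)
  fix v show "v \<in> vertices (Node ts) \<longleftrightarrow> v \<in> insert [] (\<Union>k<length ts. Cons k ` vertices (ts!k))"
    unfolding vertices_Node by blast
qed

lemma vert_contour: "v \<in> vertices t \<longleftrightarrow> (\<exists>s<length (contour t). contour t ! s = v)"
proof (induction t arbitrary: v)
  case (Node ts)
  show ?case
  proof
    assume "v \<in> vertices (Node ts)"
    then consider "v = []" | k w where "v = k#w" "k < length ts" "w \<in> vertices (ts!k)"
      by (auto simp: vertices_Node)
    then show "\<exists>s<length (contour (Node ts)). contour (Node ts) ! s = v"
    proof cases
      case 1 then show ?thesis using len_contour_pos[of "Node ts"] by (intro exI[of _ 0]) auto
    next
      case 2
      from Node.IH[of "ts!k" w] 2 obtain q where q: "q < length (contour (ts!k))" "contour (ts!k) ! q = w"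
        by auto
      have "off ts k + Suc (length (contour (ts!k))) \<le> off ts (length ts)"
        using off_lt[of k "length ts" ts] 2 by simp
      then have "Suc (off ts k + q) < length (contour (Node ts))"
        using q unfolding C_len by linarith
      then show ?thesis using C_nth[of k ts q] q 2 by (intro exI[of _ "Suc (off ts k + q)"]) auto
    qed
  next
    assume "\<exists>s<length (contour (Node ts)). contour (Node ts) ! s = v"
    then obtain s where s: "s < length (contour (Node ts))" "contour (Node ts) ! s = v" by blast
    show "v \<in> vertices (Node ts)"
    proof (cases "s = 0")
      case True then show ?thesis using s by (simp add: vertices_Node)
    next
      case False
      then obtain k q where kq: "k < length ts" "q \<le> length (contour (ts!k))" "s = Suc (off ts k + q)"
        using C_loc[of s ts] s by auto
      show ?thesis
      proof (cases "q < length (contour (ts!k))")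
        case True
        then have "contour (ts!k) ! q \<in> vertices (ts!k)" using Node.IH[of "ts!k"] kq by auto
        then show ?thesis using C_nth[OF kq(1,2)] True s kq by (auto simp: vertices_Node)
      next
        case False then show ?thesis using C_nth[OF kq(1,2)] s kq by (auto simp: vertices_Node)
      qed
    qed
  qed
qed

lemma vertices_set: "vertices t = set (contour t)"
  using vert_contour[of _ t] by (auto simp: in_set_conv_nth)

lemma finite_vertices: "finite (vertices t)" by (simp add: vertices_set)

lemma card_len: "Suc (length (contour t)) = 2 * card (vertices t)"
proof (induction t)
  case (Node ts)
  have disj: "\<forall>i\<in>{..<length ts}. \<forall>j\<in>{..<length ts}. i \<noteq> j \<longrightarrow> Cons i ` vertices (ts!i) \<inter> Cons j ` vertices (ts!j) = {}"
    by auto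
  have "card (vertices (Node ts)) = Suc (card (\<Union>k<length ts. Cons k ` vertices (ts!k)))"
    unfolding vertices_Node_eq by (subst card_insert_disjoint) (auto simp: finite_vertices)
  also have "card (\<Union>k<length ts. Cons k ` vertices (ts!k)) = (\<Sum>k<length ts. card (Cons k ` vertices (ts!k)))"
    by (rule card_UN_disjoint) (auto simp: finite_vertices)
  also have "\<dots> = (\<Sum>k<length ts. card (vertices (ts!k)))"
    by (rule sum.cong) (auto simp: card_image)
  finally have 1: "card (vertices (Node ts)) = Suc (\<Sum>k<length ts. card (vertices (ts!k)))" .
  have "off ts (length ts) = (\<Sum>k<length ts. 2 * card (vertices (ts!k)))"
    unfolding off_def by (rule sum.cong) (auto simp: Node.IH)
  then show ?case using 1 by (simp add: len_cl sum_distrib_left)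
qed

lemma off_even: "off ts k = 2 * (\<Sum>j<k. card (vertices (ts!j)))"
  unfolding off_def sum_distrib_left by (rule sum.cong) (auto simp: card_len)

lemma len_odd: "odd (length (contour t))"
  using card_len[of t] by (metis even_Suc even_mult_iff even_numeral)

lemma parity: "s < length (contour t) \<Longrightarrow> even (length (contour t ! s)) \<longleftrightarrow> even s"
proof (induction t arbitrary: s)
  case (Node ts)
  show ?case
  proof (cases "s = 0")
    case True then show ?thesis by simp
  next
    case False
    then obtain k q where kq: "k < length ts" "q \<le> length (contour (ts!k))" "s = Suc (off ts k + q)"
      using C_loc[of s ts] Node.prems by auto
    show ?thesis
    proof (cases "q < length (contour (ts!k))")
      case True
      then show ?thesis using C_nth[OF kq(1,2)] kq Node.IH[of "ts!k" q] by (simp add: off_even)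
    next
      case False
      then have "q = length (contour (ts!k))" using kq by simp
      then show ?thesis using C_nth[OF kq(1,2)] kq len_odd[of "ts!k"] by (simp add: off_even)
    qed
  qed
qed

lemma same_parity: "a < length (contour t) \<Longrightarrow> b < length (contour t) \<Longrightarrow> contour t ! a = contour t ! b \<Longrightarrow> even a \<longleftrightarrow> even b"
  using parity[of a t] parity[of b t] by simp

lemma ncross: "p \<le> r \<Longrightarrow> r \<le> q \<Longrightarrow> q < length (contour t) \<Longrightarrow> contour t ! p = contour t ! q \<Longrightarrow>
   \<exists>z. contour t ! r = contour t ! p @ z"
proof (induction t arbitrary: p q r)
  case (Node ts)
  show ?case
  proof (cases "contour (Node ts) ! p = []")
    case True then show ?thesis by simp
  next
    case False
    then have p0: "p > 0" by (cases p) auto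
    then have q0: "q > 0" "r > 0" using Node.prems by auto
    obtain k a where ka: "k < length ts" "a \<le> length (contour (ts!k))" "p = Suc (off ts k + a)"
      using C_loc[of p ts] p0 Node.prems by auto
    obtain k' b where kb: "k' < length ts" "b \<le> length (contour (ts!k'))" "q = Suc (off ts k' + b)"
      using C_loc[of q ts] q0 Node.prems by auto
    obtain k'' c where kc: "k'' < length ts" "c \<le> length (contour (ts!k''))" "r = Suc (off ts k'' + c)"
      using C_loc[of r ts] q0 Node.prems by auto
    have a: "a < length (contour (ts!k))" using C_nth[OF ka(1,2)] False ka by (auto split: if_splits)
    have b: "b < length (contour (ts!k'))" using C_nth[OF kb(1,2)] False kb Node.prems by (auto split: if_splits)
    have "k = k'" "contour (ts!k) ! a = contour (ts!k') ! b"
      using C_nth[OF ka(1,2)] C_nth[OF kb(1,2)] a b ka kb Node.prems by auto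
    have "k'' = k"
    proof (rule ccontr)
      assume "k'' \<noteq> k"
      then consider "k'' < k" | "k < k''" by linarith
      then show False
      proof cases
        case 1 then show ?thesis using off_lt[OF 1, of ts] kc ka Node.prems by linarith
      next
        case 2
        have "q = Suc (off ts k + b)" "b < length (contour (ts!k))" using kb b \<open>k = k'\<close> by auto
        then show ?thesis using off_lt[OF 2, of ts] kc Node.prems by linarith
      qed
    qed
    then have c: "a \<le> c" "c \<le> b" using kc ka kb Node.prems \<open>k = k'\<close> by auto
    then obtain z where "contour (ts!k) ! c = contour (ts!k) ! a @ z"
      using Node.IH[of "ts!k" a c b] \<open>k = k'\<close> ka kb b \<open>contour (ts!k) ! a = contour (ts!k') ! b\<close> by auto
    then show ?thesis using C_nth[OF ka(1,2)] C_nth[OF kc(1,2)] \<open>k'' = k\<close> c a b \<open>k = k'\<close> ka kc by auto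
  qed
qed

lemma cross: "p < r \<Longrightarrow> r < q \<Longrightarrow> q < s \<Longrightarrow> s < length (contour t) \<Longrightarrow>
  contour t ! p = contour t ! q \<Longrightarrow> contour t ! r = contour t ! s \<Longrightarrow> contour t ! p = contour t ! r"
proof -
  assume a: "p < r" "r < q" "q < s" "s < length (contour t)" "contour t ! p = contour t ! q" "contour t ! r = contour t ! s"
  obtain z1 where 1: "contour t ! r = contour t ! p @ z1" using ncross[of p r q t] a by auto
  obtain z2 where 2: "contour t ! q = contour t ! r @ z2" using ncross[of r q s t] a by auto
  from 1 2 a have "z1 = []" by simp
  then show ?thesis using 1 by simp
qed



lemma bdeg_Cons: "k < length ts \<Longrightarrow> bdeg (Node ts) (k#w) = bdeg (ts!k) w"
  by (simp add: bdeg_def nchildren_def)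

lemma nbr_Cons: "k < length ts \<Longrightarrow> w \<noteq> [] \<Longrightarrow> nbr (Node ts) (k#w) j = k # nbr (ts!k) w j"
  by (simp add: nbr_def bdeg_Cons)

lemma bdeg_single: "k < length ts \<Longrightarrow> ts!k = Node us \<Longrightarrow> bdeg (Node ts) [k] = Suc (length us)"
  by (simp add: bdeg_def nchildren_def)

lemma nbr_single: "k < length ts \<Longrightarrow> ts!k = Node us \<Longrightarrow>
   nbr (Node ts) [k] j = (if j = 0 \<or> j = Suc (length us) then [] else [k, j-1])"
  by (simp add: nbr_def bdeg_single)

lemma nbhd:
  "v \<in> vertices t \<Longrightarrow> v \<noteq> [] \<Longrightarrow>
    (\<forall>s. 0 < s \<longrightarrow> Suc s < length (contour t) \<longrightarrow> contour t ! s = v \<longrightarrow>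
       (\<exists>j<bdeg t v. contour t ! (s-1) = nbr t v j \<and> contour t ! Suc s = nbr t v (Suc j))) \<and>
    (\<forall>j<bdeg t v. \<exists>s. 0 < s \<and> Suc s < length (contour t) \<and> contour t ! s = v \<and>
       contour t ! (s-1) = nbr t v j \<and> contour t ! Suc s = nbr t v (Suc j))"
proof (induction t arbitrary: v)
  case (Node ts)
  obtain k w where kw: "v = k#w" "k < length ts" "w \<in> vertices (ts!k)"
    using Node.prems by (auto simp: vertices_Node)
  let ?C = "contour (Node ts)" and ?Ck = "contour (ts!k)"
  have lenC: "off ts k + Suc (length ?Ck) \<le> off ts (length ts)" "length ?C = Suc (off ts (length ts))"
    using off_lt[of k "length ts" ts] kw by (auto simp only: C_len)
  have shift: "?C ! Suc (off ts k + q) = k # ?Ck ! q" if "q < length ?Ck" for q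
    using C_nth[of k ts q] kw that by simp
  have sep: "?C ! Suc (off ts k + length ?Ck) = []" using C_nth[of k ts "length ?Ck"] kw by simp
  show ?case
  proof (cases "w = []")
    case True
    obtain us where us: "ts!k = Node us" by (cases "ts!k")
    have bd: "bdeg (Node ts) v = Suc (length us)" using bdeg_single[OF kw(2) us] kw True by simp
    have nb: "nbr (Node ts) v j = (if j = 0 \<or> j = Suc (length us) then [] else [k, j-1])" for j
      using nbr_single[OF kw(2) us] kw True by simp
    have lenCk: "length ?Ck = Suc (off us (length us))" using us C_len by simp
    have occ: "0 < Suc (off ts k + off us j) \<and> Suc (Suc (off ts k + off us j)) < length ?C \<and>
       ?C ! Suc (off ts k + off us j) = v \<and>
       ?C ! (Suc (off ts k + off us j) - 1) = nbr (Node ts) v j \<and>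
       ?C ! Suc (Suc (off ts k + off us j)) = nbr (Node ts) v (Suc j)" if j: "j \<le> length us" for j
    proof -
      have oj: "off us j \<le> off us (length us)" using off_mono j by blast
      have a1: "?C ! Suc (off ts k + off us j) = v"
        using shift[of "off us j"] oj lenCk R0[of j us] j us kw True by simp
      have a2: "?C ! (Suc (off ts k + off us j) - 1) = nbr (Node ts) v j"
      proof (cases "j = 0")
        case True then show ?thesis using R0[of k ts] kw nb by simp
      next
        case False
        have "off us j > 0" using False off_lt[of 0 j us] by simp
        then have "Suc (off ts k + off us j) - 1 = Suc (off ts k + (off us j - 1))" by simp
        then show ?thesis using shift[of "off us j - 1"] oj lenCk R2[of j us] False j us nb by simp
      qed
      have a3: "?C ! Suc (Suc (off ts k + off us j)) = nbr (Node ts) v (Suc j)"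
      proof (cases "j < length us")
        case True
        have "off us j + Suc (length (contour (us!j))) \<le> off us (length us)" using off_lt True by blast
        then have "Suc (off us j) < length ?Ck" using lenCk by simp
        then show ?thesis using shift[of "Suc (off us j)"] R1[of j us] True us nb by simp
      next
        case False
        then have "j = length us" using j by simp
        then show ?thesis using sep lenCk nb by simp
      qed
      have a4: "Suc (Suc (off ts k + off us j)) < length ?C" using lenC lenCk oj by linarith
      show ?thesis using a1 a2 a3 a4 by simp
    qed
    show ?thesis
    proof (intro conjI allI impI)
      fix s assume s: "0 < s" "Suc s < length ?C" "?C ! s = v"
      obtain k' q where kq: "k' < length ts" "q \<le> length (contour (ts!k'))" "s = Suc (off ts k' + q)"
        using C_loc[of s ts] s by auto
      have q: "q < length (contour (ts!k'))" "k' = k" "contour (ts!k') ! q = []"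
        using C_nth[OF kq(1,2)] s kq kw True by (auto split: if_splits)
      obtain j where j: "j \<le> length us" "q = off us j" using Rloc[of q us] q us by auto
      show "\<exists>j<bdeg (Node ts) v. ?C ! (s-1) = nbr (Node ts) v j \<and> ?C ! Suc s = nbr (Node ts) v (Suc j)"
        using occ[OF j(1)] j kq q bd by (intro exI[of _ j]) auto
    next
      fix j assume "j < bdeg (Node ts) v"
      then have "j \<le> length us" using bd by simp
      from occ[OF this] show "\<exists>s. 0 < s \<and> Suc s < length ?C \<and> ?C ! s = v \<and>
       ?C ! (s-1) = nbr (Node ts) v j \<and> ?C ! Suc s = nbr (Node ts) v (Suc j)" by blast
    qed
  next
    case False
    have bd: "bdeg (Node ts) v = bdeg (ts!k) w" using bdeg_Cons kw by simp
    have nb: "nbr (Node ts) v j = k # nbr (ts!k) w j" for j using nbr_Cons kw False by simp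
    have IH: "(\<forall>s. 0 < s \<longrightarrow> Suc s < length ?Ck \<longrightarrow> ?Ck ! s = w \<longrightarrow>
       (\<exists>j<bdeg (ts!k) w. ?Ck ! (s-1) = nbr (ts!k) w j \<and> ?Ck ! Suc s = nbr (ts!k) w (Suc j))) \<and>
    (\<forall>j<bdeg (ts!k) w. \<exists>s. 0 < s \<and> Suc s < length ?Ck \<and> ?Ck ! s = w \<and>
       ?Ck ! (s-1) = nbr (ts!k) w j \<and> ?Ck ! Suc s = nbr (ts!k) w (Suc j))"
      using Node.IH[of "ts!k" w] kw False by auto
    have tr: "0 < Suc (off ts k + q) \<and> Suc (Suc (off ts k + q)) < length ?C \<and>
       ?C ! Suc (off ts k + q) = k # ?Ck ! q \<and>
       ?C ! (Suc (off ts k + q) - 1) = k # ?Ck ! (q - 1) \<and>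
       ?C ! Suc (Suc (off ts k + q)) = k # ?Ck ! Suc q" if q: "0 < q" "Suc q < length ?Ck" for q
    proof -
      have "Suc (off ts k + q) - 1 = Suc (off ts k + (q - 1))" using q by simp
      then show ?thesis using shift[of q] shift[of "q-1"] shift[of "Suc q"] q lenC by auto
    qed
    show ?thesis
    proof (intro conjI allI impI)
      fix s assume s: "0 < s" "Suc s < length ?C" "?C ! s = v"
      obtain k' q where kq: "k' < length ts" "q \<le> length (contour (ts!k'))" "s = Suc (off ts k' + q)"
        using C_loc[of s ts] s by auto
      have q: "q < length (contour (ts!k'))" "k' = k" "contour (ts!k') ! q = w"
        using C_nth[OF kq(1,2)] s kq kw by (auto split: if_splits)
      have q0: "0 < q" using q False by (cases q) auto
      have q1: "Suc q < length ?Ck"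
      proof (rule ccontr)
        assume "\<not> ?thesis"
        then have "q = length ?Ck - 1" using q by simp
        then show False using C_last[of "ts!k"] q False by simp
      qed
      obtain j where j: "j < bdeg (ts!k) w" "?Ck ! (q-1) = nbr (ts!k) w j" "?Ck ! Suc q = nbr (ts!k) w (Suc j)"
        using IH q0 q1 q by blast
      show "\<exists>j<bdeg (Node ts) v. ?C ! (s-1) = nbr (Node ts) v j \<and> ?C ! Suc s = nbr (Node ts) v (Suc j)"
        using tr[OF q0 q1] j kq q bd nb by (intro exI[of _ j]) auto
    next
      fix j assume "j < bdeg (Node ts) v"
      then obtain q where q: "0 < q" "Suc q < length ?Ck" "?Ck ! q = w"
        "?Ck ! (q-1) = nbr (ts!k) w j" "?Ck ! Suc q = nbr (ts!k) w (Suc j)" using IH bd by auto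
      show "\<exists>s. 0 < s \<and> Suc s < length ?C \<and> ?C ! s = v \<and>
       ?C ! (s-1) = nbr (Node ts) v j \<and> ?C ! Suc s = nbr (Node ts) v (Suc j)"
        using tr[OF q(1,2)] q nb kw by (intro exI[of _ "Suc (off ts k + q)"]) simp
    qed
  qed
qed



lemma lenC: "length (contour t) = Suc (2 * edges t)"
proof -
  have "[] \<in> vertices t" by (simp add: vertices_def)
  then have "card (vertices t) \<ge> 1" using finite_vertices[of t] card_0_eq[of "vertices t"] by fastforce
  then show ?thesis using card_len[of t] by (simp add: edges_def)
qed

lemma wc_0[simp]: "wc t 0 = []" by (simp add: wc_def)

lemma wc_white: "m \<le> edges t \<Longrightarrow> wc t m \<in> white t"
proof -
  assume m: "m \<le> edges t"
  then have s: "2*m < length (contour t)" using lenC[of t] by simp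
  then have "contour t ! (2*m) \<in> vertices t" using vert_contour[of _ t] by blast
  then show ?thesis using parity[OF s] by (auto simp: wc_def white_def)
qed

lemma white_wc: "w \<in> white t \<Longrightarrow> \<exists>m\<le>edges t. wc t m = w"
proof -
  assume w: "w \<in> white t"
  then obtain s where s: "s < length (contour t)" "contour t ! s = w"
    using vert_contour[of w t] by (auto simp: white_def)
  then have "even s" using parity[of s t] w by (auto simp: white_def)
  then obtain m where "s = 2*m" by (auto elim: evenE)
  then show ?thesis using s lenC[of t] by (intro exI[of _ m]) (auto simp: wc_def)
qed

lemma odd_black: "i \<in> {1..edges t} \<Longrightarrow> contour t ! (2*i-1) \<in> black t"
proof -
  assume i: "i \<in> {1..edges t}"
  then have s: "2*i-1 < length (contour t)" using lenC[of t] by auto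
  then have "odd (length (contour t ! (2*i-1)))" using parity[OF s] i by auto
  then show ?thesis using vert_contour[of _ t] s by (auto simp: black_def)
qed

lemma Bset_sub: "Bset t v \<subseteq> {1..edges t}" by (auto simp: Bset_def)
lemma finite_Bset: "finite (Bset t v)" using Bset_sub finite_subset by blast

lemma black_ne: "v \<in> black t \<Longrightarrow> v \<noteq> []" by (auto simp: black_def)

lemma B1: "v \<in> black t \<Longrightarrow> i \<in> Bset t v \<Longrightarrow> \<exists>j<bdeg t v. wc t (i-1) = nbr t v j \<and> wc t i = nbr t v (Suc j)"
proof -
  assume v: "v \<in> black t" and i: "i \<in> Bset t v"
  then have i1: "1 \<le> i" "i \<le> edges t" "contour t ! (2*i-1) = v" by (auto simp: Bset_def)
  have s: "0 < 2*i-1" "Suc (2*i-1) < length (contour t)" using i1 lenC[of t] by auto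
  have nb: "\<forall>s. 0 < s \<longrightarrow> Suc s < length (contour t) \<longrightarrow> contour t ! s = v \<longrightarrow>
       (\<exists>j<bdeg t v. contour t ! (s-1) = nbr t v j \<and> contour t ! Suc s = nbr t v (Suc j))"
    using nbhd[of v t] v black_ne[OF v] by (auto simp: black_def)
  obtain j where "j<bdeg t v" "contour t ! (2*i-1-1) = nbr t v j" "contour t ! Suc (2*i-1) = nbr t v (Suc j)"
    using nb[rule_format, OF s i1(3)] by blast
  moreover have "2*i-1-1 = 2*(i-1)" "Suc (2*i-1) = 2*i" using i1 by auto
  ultimately show ?thesis by (auto simp: wc_def)
qed

lemma B2: "v \<in> black t \<Longrightarrow> j < bdeg t v \<Longrightarrow> \<exists>i\<in>Bset t v. wc t (i-1) = nbr t v j \<and> wc t i = nbr t v (Suc j)"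
proof -
  assume v: "v \<in> black t" and j: "j < bdeg t v"
  obtain s where s: "0 < s" "Suc s < length (contour t)" "contour t ! s = v"
    "contour t ! (s-1) = nbr t v j" "contour t ! Suc s = nbr t v (Suc j)"
    using nbhd[of v t] v black_ne[OF v] j by (auto simp: black_def)
  have "odd s" using parity[of s t] s v by (auto simp: black_def)
  then obtain i' where i': "s = Suc (2*i')" by (auto elim: oddE)
  have "Suc i' \<in> Bset t v" using s i' lenC[of t] by (auto simp: Bset_def)
  then show ?thesis using s i' by (intro bexI[of _ "Suc i'"]) (auto simp: wc_def)
qed

lemma B3: "v \<in> black t \<Longrightarrow> i \<in> Bset t v \<Longrightarrow> i' \<in> Bset t v \<Longrightarrow> wc t (i-1) = wc t (i'-1) \<Longrightarrow> i = i'"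
proof -
  have main: "False" if "i < i'" "i \<in> Bset t v" "i' \<in> Bset t v" "wc t (i-1) = wc t (i'-1)" for i i'
  proof -
    have a: "1 \<le> i" "i' \<le> edges t" "contour t ! (2*i-1) = v" "contour t ! (2*i'-1) = v" using that by (auto simp: Bset_def)
    have e1: "2*(i-1) = 2*i-2" "2*(i'-1) = 2*i'-2" by auto
    have c: "contour t ! (2*i-2) = contour t ! (2*i'-2)" using that(4) e1 by (simp add: wc_def)
    have o: "2*i-2 < 2*i-1" "2*i-1 < 2*i'-2" "2*i'-2 < 2*i'-1" "2*i'-1 < length (contour t)"
      using a that(1) lenC[of t] by auto
    have "contour t ! (2*i-2) = contour t ! (2*i-1)"
      using cross[OF o c] a by simp
    moreover have "2*i-1 < length (contour t)" using a that lenC[of t] by auto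
    ultimately have "even (2*i-2) \<longleftrightarrow> even (2*i-1)" using same_parity[of "2*i-2" t "2*i-1"] by auto
    then show False using a by presburger
  qed
  assume "v \<in> black t" "i \<in> Bset t v" "i' \<in> Bset t v" "wc t (i-1) = wc t (i'-1)"
  then show "i = i'" using main[of i i'] main[of i' i] by (metis linorder_neqE_nat)
qed

lemma nbr_inj: "v \<noteq> [] \<Longrightarrow> j < bdeg t v \<Longrightarrow> j' < bdeg t v \<Longrightarrow> nbr t v j = nbr t v j' \<Longrightarrow> j = j'"
  by (cases "j = 0"; cases "j' = 0") (auto simp: nbr_def dest: arg_cong[of _ _ length])

lemma nbr_bdeg: "nbr t v (bdeg t v) = nbr t v 0" by (simp add: nbr_def)

lemma sum_Bset_tele:
  assumes v: "v \<in> black t"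
  shows "(\<Sum>i\<in>Bset t v. l (wc t i) - l (wc t (i-1))) = (0::int)"
proof -
  define \<psi> where "\<psi> j = (SOME i. i \<in> Bset t v \<and> wc t (i-1) = nbr t v j \<and> wc t i = nbr t v (Suc j))" for j
  have \<psi>: "\<psi> j \<in> Bset t v \<and> wc t (\<psi> j - 1) = nbr t v j \<and> wc t (\<psi> j) = nbr t v (Suc j)" if "j < bdeg t v" for j
    unfolding \<psi>_def by (rule someI_ex) (use B2[OF v that] in blast)
  have bij: "bij_betw \<psi> {..<bdeg t v} (Bset t v)"
    unfolding bij_betw_def
  proof
    show "inj_on \<psi> {..<bdeg t v}"
      by (rule inj_onI) (metis \<psi> lessThan_iff nbr_inj black_ne[OF v])
    show "\<psi> ` {..<bdeg t v} = Bset t v"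
    proof
      show "\<psi> ` {..<bdeg t v} \<subseteq> Bset t v" using \<psi> by auto
      show "Bset t v \<subseteq> \<psi> ` {..<bdeg t v}"
      proof
        fix i assume i: "i \<in> Bset t v"
        then obtain j where j: "j<bdeg t v" "wc t (i-1) = nbr t v j" by (metis B1 v)
        then have "\<psi> j = i" using B3[OF v, of "\<psi> j" i] \<psi>[OF j(1)] i by auto
        then show "i \<in> \<psi> ` {..<bdeg t v}" using j by auto
      qed
    qed
  qed
  have "(\<Sum>i\<in>Bset t v. l (wc t i) - l (wc t (i-1))) = (\<Sum>j<bdeg t v. l (wc t (\<psi> j)) - l (wc t (\<psi> j - 1)))"
    by (rule sum.reindex_bij_betw[OF bij, symmetric])
  also have "\<dots> = (\<Sum>j<bdeg t v. l (nbr t v (Suc j)) - l (nbr t v j))"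
    by (rule sum.cong) (use \<psi> in auto)
  also have "\<dots> = 0" by (subst sum_lessThan_telescope[where f="\<lambda>j. l (nbr t v j)"]) (simp add: nbr_bdeg)
  finally show ?thesis .
qed



definition Sx :: "(nat \<Rightarrow> int) \<Rightarrow> nat \<Rightarrow> int" where "Sx x m = (\<Sum>i\<in>{1..m}. x i)"

definition Xset :: "ptree \<Rightarrow> (nat \<Rightarrow> int) set" where
  "Xset t = {x. (\<forall>i. i \<notin> {1..edges t} \<longrightarrow> x i = 0) \<and> (\<forall>i\<in>{1..edges t}. -1 \<le> x i) \<and> x \<in> cond_event t}"

definition incr :: "ptree \<Rightarrow> (nat list \<Rightarrow> int) \<Rightarrow> nat \<Rightarrow> int" where
  "incr t l i = (if i \<in> {1..edges t} then l (wc t i) - l (wc t (i-1)) else 0)"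

definition lab :: "ptree \<Rightarrow> (nat \<Rightarrow> int) \<Rightarrow> nat list \<Rightarrow> int" where
  "lab t x p = (if p \<in> white t then Sx x (SOME m. m \<le> edges t \<and> wc t m = p) else 0)"

lemma Sx_0[simp]: "Sx x 0 = 0" by (simp add: Sx_def)
lemma Sx_Suc: "Sx x (Suc m) = Sx x m + x (Suc m)" by (simp add: Sx_def)

lemma Sx_split: "m \<le> m' \<Longrightarrow> Sx x m' = Sx x m + (\<Sum>i\<in>{Suc m..m'}. x i)"
proof -
  assume "m \<le> m'"
  then have "{1..m'} = {1..m} \<union> {Suc m..m'}" by auto
  then show ?thesis unfolding Sx_def by (simp add: sum.union_disjoint[symmetric])
qed

lemma sum_group_zero:
  assumes S: "S \<subseteq> {1..edges t}" and cl: "\<forall>i\<in>S. Bset t (contour t ! (2*i-1)) \<subseteq> S"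
    and x: "x \<in> cond_event t"
  shows "(\<Sum>i\<in>S. x i) = 0"
proof -
  define g where "g i = contour t ! (2*i-1)" for i
  have fS: "finite S" using S finite_subset by blast
  have "(\<Sum>i\<in>S. x i) = (\<Sum>v\<in>g ` S. \<Sum>i\<in>{i. i \<in> S \<and> g i = v}. x i)"
    by (rule sum.group[symmetric]) (use fS in auto)
  also have "\<dots> = (\<Sum>v\<in>g ` S. 0)"
  proof (rule sum.cong)
    fix v assume "v \<in> g ` S"
    then obtain i0 where i0: "i0 \<in> S" "v = g i0" by auto
    have vb: "v \<in> black t" using odd_black[of i0 t] i0 S g_def by auto
    have "{i. i \<in> S \<and> g i = v} = Bset t v"
      using S cl i0 by (auto simp: Bset_def g_def)
    then show "(\<Sum>i\<in>{i. i \<in> S \<and> g i = v}. x i) = 0" using x vb by (simp add: cond_event_def)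
  qed simp
  finally show ?thesis by simp
qed

lemma sum_all_zero: "x \<in> cond_event t \<Longrightarrow> (\<Sum>i\<in>{1..edges t}. x i) = 0"
  by (rule sum_group_zero) (use Bset_sub in auto)

lemma interval_zero:
  assumes mm: "m < m'" "m' \<le> edges t" and w: "wc t m = wc t m'" and x: "x \<in> cond_event t"
  shows "(\<Sum>i\<in>{Suc m..m'}. x i) = 0"
proof (rule sum_group_zero[OF _ _ x])
  show "{Suc m..m'} \<subseteq> {1..edges t}" using mm by auto
  show "\<forall>i\<in>{Suc m..m'}. Bset t (contour t ! (2*i-1)) \<subseteq> {Suc m..m'}"
  proof (intro ballI subsetI)
    fix i i' assume i: "i \<in> {Suc m..m'}" and i': "i' \<in> Bset t (contour t ! (2*i-1))"
    then have i'1: "1 \<le> i'" "i' \<le> edges t" "contour t ! (2*i'-1) = contour t ! (2*i-1)" by (auto simp: Bset_def)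
    have L: "length (contour t) = Suc (2 * edges t)" by (rule lenC)
    have ww: "contour t ! (2*m) = contour t ! (2*m')" using w by (simp add: wc_def)
    show "i' \<in> {Suc m..m'}"
    proof (rule ccontr)
      assume "i' \<notin> {Suc m..m'}"
      then consider "i' \<le> m" | "m' < i'" by auto
      then show False
      proof cases
        case 1
        have o: "2*i'-1 < 2*m" "2*m < 2*i-1" "2*i-1 < 2*m'" "2*m' < length (contour t)"
          using 1 i i'1 mm L by auto
        have "contour t ! (2*i'-1) = contour t ! (2*m)" using cross[OF o i'1(3) ww] i'1 by simp
        then have "even (2*i'-1) \<longleftrightarrow> even (2*m)" using same_parity[of "2*i'-1" t "2*m"] o by auto
        then show False using i'1 by presburger
      next
        case 2
        have o: "2*m < 2*i-1" "2*i-1 < 2*m'" "2*m' < 2*i'-1" "2*i'-1 < length (contour t)"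
          using 2 i i'1 mm L by auto
        have "contour t ! (2*m) = contour t ! (2*i-1)" using cross[OF o ww i'1(3)[symmetric]] by simp
        then have "even (2*m) \<longleftrightarrow> even (2*i-1)" using same_parity[of "2*m" t "2*i-1"] o by auto
        then show False using i by presburger
      qed
    qed
  qed
qed

lemma Sx_welldef:
  assumes "m \<le> edges t" "m' \<le> edges t" "wc t m = wc t m'" "x \<in> cond_event t"
  shows "Sx x m = Sx x m'"
proof -
  have *: "Sx x a = Sx x b" if "a < b" "b \<le> edges t" "wc t a = wc t b" for a b
    using Sx_split[of a b x] interval_zero[OF that assms(4)] that by simp
  show ?thesis
  proof (cases m m' rule: linorder_cases)
    case less show ?thesis using *[OF less assms(2,3)] .
  next
    case equal then show ?thesis by simp
  next
    case greater show ?thesis using *[OF greater assms(1) assms(3)[symmetric]] by simp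
  qed
qed

lemma lab_wc: "x \<in> cond_event t \<Longrightarrow> m \<le> edges t \<Longrightarrow> lab t x (wc t m) = Sx x m"
proof -
  assume x: "x \<in> cond_event t" and m: "m \<le> edges t"
  let ?m = "SOME m'. m' \<le> edges t \<and> wc t m' = wc t m"
  have "?m \<le> edges t \<and> wc t ?m = wc t m" by (rule someI_ex) (use m in blast)
  then show ?thesis using Sx_welldef[of ?m t m x] wc_white[OF m] x m by (simp add: lab_def)
qed

lemma lab_adm: "x \<in> Xset t \<Longrightarrow> lab t x \<in> admissible t"
proof -
  assume x: "x \<in> Xset t"
  then have xc: "x \<in> cond_event t" by (simp add: Xset_def)
  have root: "lab t x [] = 0" using lab_wc[OF xc, of 0] by simp
  have nw: "\<forall>p. p \<notin> white t \<longrightarrow> lab t x p = 0" by (simp add: lab_def)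
  have ad: "lab t x (nbr t u (Suc j)) \<ge> lab t x (nbr t u j) - 1" if u: "u \<in> black t" "j < bdeg t u" for u j
  proof -
    obtain i where i: "i \<in> Bset t u" "wc t (i-1) = nbr t u j" "wc t i = nbr t u (Suc j)" using B2[OF u] by blast
    have i1: "1 \<le> i" "i \<le> edges t" using i(1) Bset_sub[of t u] by auto
    have "lab t x (nbr t u (Suc j)) = Sx x i" using lab_wc[OF xc i1(2)] i by simp
    moreover have "lab t x (nbr t u j) = Sx x (i-1)" using lab_wc[OF xc, of "i-1"] i i1 by simp
    moreover have "Sx x i = Sx x (i-1) + x i" using Sx_Suc[of x "i-1"] i1 by simp
    moreover have "x i \<ge> -1" using x i1 by (simp add: Xset_def)
    ultimately show ?thesis by simp
  qed
  show ?thesis using root nw ad by (auto simp: admissible_def)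
qed

lemma incr_lab: "x \<in> Xset t \<Longrightarrow> incr t (lab t x) = x"
proof
  fix i assume x: "x \<in> Xset t"
  then have xc: "x \<in> cond_event t" by (simp add: Xset_def)
  show "incr t (lab t x) i = x i"
  proof (cases "i \<in> {1..edges t}")
    case True
    then have i1: "1 \<le> i" "i \<le> edges t" "i - 1 \<le> edges t" by auto
    have a: "lab t x (wc t i) = Sx x i" using lab_wc[OF xc i1(2)] .
    have b: "lab t x (wc t (i-1)) = Sx x (i-1)" using lab_wc[OF xc i1(3)] .
    have c: "Sx x i = Sx x (i-1) + x i" using Sx_Suc[of x "i-1"] i1 by simp
    show ?thesis using a b c True by (simp add: incr_def)
  next
    case False
    have "x i = 0" using x False unfolding Xset_def by blast
    then show ?thesis using False unfolding incr_def by (simp only: if_False)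
  qed
qed

lemma adm_root: "l \<in> admissible t \<Longrightarrow> l [] = 0" by (simp add: admissible_def)

lemma Sx_incr: "l \<in> admissible t \<Longrightarrow> m \<le> edges t \<Longrightarrow> Sx (incr t l) m = l (wc t m)"
proof (induction m)
  case 0 then show ?case by (simp add: adm_root)
next
  case (Suc m) then show ?case by (simp add: Sx_Suc incr_def)
qed

lemma incr_in: "l \<in> admissible t \<Longrightarrow> incr t l \<in> Xset t"
proof -
  assume l: "l \<in> admissible t"
  have ge: "-1 \<le> incr t l i" if i: "i \<in> {1..edges t}" for i
  proof -
    let ?v = "contour t ! (2*i-1)"
    have vb: "?v \<in> black t" using odd_black[OF i] .
    have "i \<in> Bset t ?v" using i by (simp add: Bset_def)
    then obtain j where j: "j<bdeg t ?v" "wc t (i-1) = nbr t ?v j" "wc t i = nbr t ?v (Suc j)" using B1[OF vb] by blast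
    have "l (nbr t ?v j) - 1 \<le> l (nbr t ?v (Suc j))" using l vb j(1) unfolding admissible_def by blast
    then show ?thesis using j i by (simp add: incr_def)
  qed
  have ce: "incr t l \<in> cond_event t"
    unfolding cond_event_def
  proof (intro CollectI ballI)
    fix v assume v: "v \<in> black t"
    have "(\<Sum>i\<in>Bset t v. incr t l i) = (\<Sum>i\<in>Bset t v. l (wc t i) - l (wc t (i-1)))"
      by (rule sum.cong) (use Bset_sub[of t v] in \<open>auto simp: incr_def\<close>)
    then show "(\<Sum>i\<in>Bset t v. incr t l i) = 0" using sum_Bset_tele[OF v] by simp
  qed
  show ?thesis using ge ce by (auto simp: Xset_def incr_def)
qed

lemma incr_inj: "inj_on (incr t) (admissible t)"
proof (rule inj_onI)
  fix l l' assume l: "l \<in> admissible t" "l' \<in> admissible t" "incr t l = incr t l'"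
  show "l = l'"
  proof
    fix p show "l p = l' p"
    proof (cases "p \<in> white t")
      case True
      then obtain m where "m \<le> edges t" "wc t m = p" using white_wc by blast
      then show ?thesis using Sx_incr[OF l(1)] Sx_incr[OF l(2)] l(3) by metis
    next
      case False then show ?thesis using l by (simp add: admissible_def)
    qed
  qed
qed

lemma incr_image: "incr t ` admissible t = Xset t"
proof
  show "incr t ` admissible t \<subseteq> Xset t" using incr_in by blast
  show "Xset t \<subseteq> incr t ` admissible t"
  proof
    fix x assume "x \<in> Xset t"
    then show "x \<in> incr t ` admissible t" using incr_lab[of x t] lab_adm[of x t] by (metis imageI)
  qed
qed

lemma Xset_bound: "x \<in> Xset t \<Longrightarrow> i \<in> {1..edges t} \<Longrightarrow> x i \<le> int (edges t)"
proof -
  assume x: "x \<in> Xset t" and i: "i \<in> {1..edges t}"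
  let ?v = "contour t ! (2*i-1)"
  let ?B = "Bset t ?v"
  have vb: "?v \<in> black t" using odd_black[OF i] .
  have iB: "i \<in> ?B" using i by (simp add: Bset_def)
  have "(\<Sum>j\<in>?B. x j) = 0" using x vb by (simp add: Xset_def cond_event_def)
  then have e: "x i + (\<Sum>j\<in>?B - {i}. x j) = 0" using sum.remove[OF finite_Bset iB, of x] by simp
  have xge: "\<And>j. j \<in> ?B \<Longrightarrow> -1 \<le> x j" using x Bset_sub[of t ?v] unfolding Xset_def by blast
  have "(\<Sum>j\<in>?B - {i}. x j) \<ge> (\<Sum>j\<in>?B - {i}. -1)"
    using xge by (intro sum_mono) blast
  moreover have "(\<Sum>j\<in>?B - {i}. (-1::int)) = - int (card (?B - {i}))" by simp
  moreover have "?B - {i} \<subseteq> {1..edges t}" using Bset_sub[of t ?v] by blast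
  then have "card (?B - {i}) \<le> edges t" using card_mono[of "{1..edges t}" "?B - {i}"] by simp
  ultimately show ?thesis using e by linarith
qed

lemma finite_Xset: "finite (Xset t)"
proof (rule finite_subset)
  show "Xset t \<subseteq> {f. \<forall>i. (i \<in> {1..edges t} \<longrightarrow> f i \<in> {-1..int (edges t)}) \<and> (i \<notin> {1..edges t} \<longrightarrow> f i = 0)}"
  proof
    fix f assume f: "f \<in> Xset t"
    have a: "\<forall>i\<in>{1..edges t}. -1 \<le> f i" "\<forall>i. i \<notin> {1..edges t} \<longrightarrow> f i = 0" using f unfolding Xset_def by blast+
    show "f \<in> {f. \<forall>i. (i \<in> {1..edges t} \<longrightarrow> f i \<in> {-1..int (edges t)}) \<and> (i \<notin> {1..edges t} \<longrightarrow> f i = 0)}"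
      using a Xset_bound[OF f] by (simp del: atLeastAtMost_iff) (simp)
  qed
  show "finite {f. \<forall>i. (i \<in> {1..edges t} \<longrightarrow> f i \<in> {-1..int (edges t)}) \<and> (i \<notin> {1..edges t} \<longrightarrow> f i = (0::int))}"
    by (rule finite_set_of_finite_funs) simp_all
qed

lemma adm_ne: "admissible t \<noteq> {}"
proof -
  have "(\<lambda>_. 0) \<in> admissible t" by (simp add: admissible_def)
  then show ?thesis by blast
qed

lemma finite_adm: "finite (admissible t)"
  using finite_imageD[of "incr t" "admissible t"] incr_inj incr_image finite_Xset by metis



lemma pmf_xi: "pmf xi_pmf i = (if i \<ge> -1 then (1/2) powr (real_of_int (i + 2)) else 0)"
proof -
  define f where "f = (\<lambda>i::int. if i \<ge> -1 then (1/2::real) powr (real_of_int (i + 2)) else 0)"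
  define G where "G = map_pmf (\<lambda>n::nat. int n - 1) (geometric_pmf (1/2))"
  have inj: "inj (\<lambda>n::nat. int n - 1)" by (auto intro: injI)
  have fG: "f i = pmf G i" for i
  proof (cases "i \<ge> -1")
    case True
    then have ii: "i = int (nat (i+1)) - 1" by simp
    have "pmf G i = pmf (geometric_pmf (1/2)) (nat (i+1))"
      unfolding G_def by (subst ii) (rule pmf_map_inj'[OF inj])
    also have "\<dots> = (1/2) ^ Suc (nat (i+1))" by simp
    also have "\<dots> = (1/2) powr real (Suc (nat (i+1)))" by (rule powr_realpow[symmetric]) simp
    also have "real (Suc (nat (i+1))) = real_of_int (i+2)" using True by simp
    finally show ?thesis using True by (simp add: f_def)
  next
    case False
    have "i \<notin> set_pmf G" using False by (auto simp: G_def)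
    then show ?thesis using False by (simp add: f_def set_pmf_iff)
  qed
  have nn: "\<And>x. 0 \<le> f x" by (simp add: f_def)
  have "(\<integral>\<^sup>+x. ennreal (f x) \<partial>count_space UNIV) = (\<integral>\<^sup>+x. ennreal (pmf G x) \<partial>count_space UNIV)"
    by (simp add: fG)
  also have "\<dots> = 1" by (simp add: nn_integral_pmf measure_pmf.emeasure_space_1)
  finally have "pmf (embed_pmf f) i = f i" by (intro pmf_embed_pmf nn)
  then show ?thesis by (simp add: xi_pmf_def f_def)
qed

lemma pmf_incr_X:
  assumes x: "x \<in> Xset t"
  shows "pmf (increments (edges t)) x = (1/2) powr (real (2 * edges t))"
proof -
  have z: "\<forall>i. i \<notin> {1..edges t} \<longrightarrow> x i = 0" and ge: "\<forall>i\<in>{1..edges t}. -1 \<le> x i"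
    and s: "(\<Sum>i\<in>{1..edges t}. x i) = 0"
    using x sum_all_zero[of x t] by (auto simp: Xset_def)
  have "pmf (increments (edges t)) x = (\<Prod>i\<in>{1..edges t}. pmf xi_pmf (x i))"
    using z by (simp add: increments_def pmf_Pi)
  also have "\<dots> = (\<Prod>i\<in>{1..edges t}. (1/2) powr (real_of_int (x i + 2)))"
    by (rule prod.cong) (use ge in \<open>auto simp: pmf_xi\<close>)
  also have "\<dots> = (1/2) powr (\<Sum>i\<in>{1..edges t}. real_of_int (x i + 2))"
    by (simp add: powr_sum)
  also have "(\<Sum>i\<in>{1..edges t}. real_of_int (x i + 2)) = real_of_int (\<Sum>i\<in>{1..edges t}. x i) + 2 * real (edges t)"
    by (simp add: sum.distrib)
  moreover have "(\<Sum>i\<in>{1..edges t}. real_of_int (x i)) = 0" using s by (metis of_int_0 of_int_sum)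
  ultimately show ?thesis by (simp add: sum.distrib mult.commute)
qed

lemma pmf_incr_notX:
  assumes x: "x \<in> cond_event t" "x \<notin> Xset t"
  shows "pmf (increments (edges t)) x = 0"
proof (cases "\<forall>i. i \<notin> {1..edges t} \<longrightarrow> x i = 0")
  case True
  then obtain i where i: "i \<in> {1..edges t}" "x i < -1" using x by (auto simp: Xset_def not_le)
  have "(\<Prod>i\<in>{1..edges t}. pmf xi_pmf (x i)) = 0"
    by (rule prod_zero) (use i in \<open>auto simp: pmf_xi intro!: bexI[of _ i]\<close>)
  then show ?thesis using True by (simp add: increments_def pmf_Pi)
next
  case False then show ?thesis by (auto simp: increments_def pmf_Pi)
qed

lemma zero_X: "(\<lambda>_. 0) \<in> Xset t" by (simp add: Xset_def cond_event_def)

lemma uniform_pmf: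
  assumes "finite S" "S \<noteq> {}" "\<And>x. pmf p x = (if x \<in> S then a else 0)"
  shows "p = pmf_of_set S"
proof -
  have sub: "set_pmf p \<subseteq> S" using assms(3) by (auto simp: set_pmf_iff split: if_splits)
  have "(\<Sum>x\<in>S. pmf p x) = 1" by (rule sum_pmf_eq_1[OF assms(1) sub])
  then have "real (card S) * a = 1" using assms(3) by simp
  then have a: "a = 1 / real (card S)" using assms(1,2) by (simp add: field_simps)
  show ?thesis by (rule pmf_eqI) (simp add: assms a indicator_def)
qed

lemma cond_uniform: "cond_pmf (increments (edges t)) (cond_event t) = pmf_of_set (Xset t)"
proof -
  let ?P = "increments (edges t)" and ?E = "cond_event t"
  have ne: "set_pmf ?P \<inter> ?E \<noteq> {}"
  proof -
    have "pmf ?P (\<lambda>_. 0) \<noteq> 0" using pmf_incr_X[OF zero_X, of t] by simp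
    then have "(\<lambda>_. 0) \<in> set_pmf ?P \<inter> ?E" using zero_X[of t] by (auto simp: set_pmf_iff Xset_def)
    then show ?thesis by blast
  qed
  show ?thesis
  proof (rule uniform_pmf[OF finite_Xset])
    show "Xset t \<noteq> {}" using zero_X by blast
    fix x
    show "pmf (cond_pmf ?P ?E) x = (if x \<in> Xset t then (1/2) powr (real (2 * edges t)) / measure ?P ?E else 0)"
      using pmf_cond[OF ne, of x] pmf_incr_X[of x t] pmf_incr_notX[of x t]
      by (auto simp: Xset_def)
  qed
qed

theorem mainTheorem3:
  fixes \<tau> :: ptree
  shows "cond_walk \<tau> = label_seq \<tau>"
proof -
  let ?n = "edges \<tau>" and ?A = "admissible \<tau>"
  have "cond_walk \<tau> = map_pmf (walk_path ?n) (pmf_of_set (Xset \<tau>))"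
    by (simp add: cond_walk_def cond_uniform)
  also have "pmf_of_set (Xset \<tau>) = map_pmf (incr \<tau>) (pmf_of_set ?A)"
    by (simp add: map_pmf_of_set_inj[OF incr_inj adm_ne finite_adm] incr_image)
  also have "map_pmf (walk_path ?n) (map_pmf (incr \<tau>) (pmf_of_set ?A)) = map_pmf (walk_path ?n \<circ> incr \<tau>) (pmf_of_set ?A)"
    by (simp add: pmf.map_comp)
  also have "\<dots> = label_seq \<tau>"
    unfolding label_seq_def
  proof (rule map_pmf_cong[OF refl])
    fix l assume "l \<in> set_pmf (pmf_of_set ?A)"
    then have l: "l \<in> ?A" using adm_ne finite_adm by simp
    show "(walk_path ?n \<circ> incr \<tau>) l = map (\<lambda>m. l (wc \<tau> m)) [0..<?n + 1]"
      unfolding walk_path_def comp_def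
      by (rule map_cong[OF refl]) (use Sx_incr[OF l] in \<open>auto simp: Sx_def\<close>)
  qed
  finally show ?thesis .
qed

end
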